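(* There exists a recursive subset $\mathcal{A}\subseteq\mathbb{Z}$ which is closed in the profinite topology of $\mathbb{Z}$ and such that the function $n\mapsto\mathcal{A}\bmod n$ (for $n\ge1$) is not recursive.
   Context: $\mathcal{A}\bmod n=\{r\in\{0,\dots,n-1\}:\exists x\in\mathcal{A},\ x\equiv r\bmod n\}$. The profinite topology on $\mathbb{Z}$ has as basis of open sets the arithmetic progressions $m+p\mathbb{Z}$ ($m\in\mathbb{Z}$, $p\ge1$). *)

theory Defs
  imports Main "HOL-Library.Nat_Bijection"
begin

datatype recf = Zero | Succ | Proj nat | Comp recf "recf list" | Prim recf recf | Mu recf

text \<open>Big-step evaluation; arities are implicit (extra arguments are ignored).\<close>
inductive eval :: "recf \<Rightarrow> nat list \<Rightarrow> nat \<Rightarrow> bool" where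
  eval_zero: "eval Zero xs 0"
| eval_succ: "eval Succ (x # xs) (Suc x)"
| eval_proj: "i < length xs \<Longrightarrow> eval (Proj i) xs (xs ! i)"
| eval_comp: "list_all2 (\<lambda>g y. eval g xs y) gs ys \<Longrightarrow> eval f ys z \<Longrightarrow> eval (Comp f gs) xs z"
| eval_prim0: "eval f xs y \<Longrightarrow> eval (Prim f g) (0 # xs) y"
| eval_primS: "eval (Prim f g) (n # xs) y \<Longrightarrow> eval g (n # y # xs) z \<Longrightarrow> eval (Prim f g) (Suc n # xs) z"
| eval_mu: "eval f (n # xs) 0 \<Longrightarrow> (\<forall>m<n. \<exists>y. y > 0 \<and> eval f (m # xs) y) \<Longrightarrow> eval (Mu f) xs n"

definition recursive_fun :: "(nat \<Rightarrow> nat) \<Rightarrow> bool" where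
  "recursive_fun f \<longleftrightarrow> (\<exists>c. \<forall>n. eval c [n] (f n))"

definition recursive_int_set :: "int set \<Rightarrow> bool" where
  "recursive_int_set A \<longleftrightarrow> recursive_fun (\<lambda>k. if int_decode k \<in> A then 1 else 0)"

definition profinite_open :: "int set \<Rightarrow> bool" where
  "profinite_open U \<longleftrightarrow>
     (\<forall>x\<in>U. \<exists>m p. p \<ge> 1 \<and> x \<in> {m + p * k | k. True} \<and> {m + p * k | k. True} \<subseteq> U)"

definition profinite_closed :: "int set \<Rightarrow> bool" where
  "profinite_closed A \<longleftrightarrow> profinite_open (- A)"

definition res_mod :: "int set \<Rightarrow> int \<Rightarrow> int set" where
  "res_mod A n = {r \<in> {0..n-1}. \<exists>x\<in>A. x mod n = r}"

definition res_mod_map_recursive :: "int set \<Rightarrow> bool" where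
  "res_mod_map_recursive A \<longleftrightarrow>
     (\<exists>f. recursive_fun f \<and> (\<forall>n\<ge>1. f n = set_encode (nat ` res_mod A (int n))))"

end

theory Submission
  imports Defs
begin


lemma prim0_inv: "eval (Prim f g) (0#xs) z \<Longrightarrow> eval f xs z"
  by (erule eval.cases) auto
lemma primS_inv: "eval (Prim f g) (Suc n#xs) z \<Longrightarrow> \<exists>y. eval (Prim f g) (n#xs) y \<and> eval g (n#y#xs) z"
  by (erule eval.cases) auto
lemma mu_inv: "eval (Mu f) xs z \<Longrightarrow> eval f (z#xs) 0 \<and> (\<forall>m<z. \<exists>y>0. eval f (m#xs) y)"
  by (erule eval.cases) auto
lemma comp_inv: "eval (Comp f gs) xs z \<Longrightarrow> \<exists>ys. list_all2 (\<lambda>g y. eval g xs y) gs ys \<and> eval f ys z"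
  by (erule eval.cases) auto

lemma eval_det: "eval c xs y \<Longrightarrow> eval c xs z \<Longrightarrow> y = z"
proof (induction arbitrary: z rule: eval.induct)
  case (eval_zero xs) from eval_zero.prems show ?case by cases auto
next
  case (eval_succ x xs) from eval_succ.prems show ?case by cases auto
next
  case (eval_proj i xs) from eval_proj.prems show ?case by cases auto
next
  case (eval_comp xs gs ys f z')
  from comp_inv[OF eval_comp.prems] obtain ys' where a: "list_all2 (\<lambda>g y. eval g xs y) gs ys'" and b: "eval f ys' z"
    by blast
  have IH: "list_all2 (\<lambda>g y. \<forall>z. eval g xs z \<longrightarrow> y = z) gs ys"
    using eval_comp(1) by (auto elim: list_all2_mono)
  have "ys = ys'" using IH a
  proof (induction arbitrary: ys' rule: list_all2_induct)
    case Nil then show ?case by simp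
  next
    case (Cons g gs y ys) then show ?case by (cases ys') auto
  qed
  then show ?case using eval_comp(2) b by blast
next
  case (eval_prim0 f xs y g) then show ?case using prim0_inv by blast
next
  case (eval_primS f g n xs y z z')
  from primS_inv[OF eval_primS.prems] obtain y' where
    "eval (Prim f g) (n#xs) y'" "eval g (n#y'#xs) z'" by blast
  then show ?case using eval_primS.IH by metis
next
  case (eval_mu f n xs z)
  from mu_inv[OF eval_mu.prems] have z: "eval f (z # xs) 0" "\<forall>m<z. \<exists>y>0. eval f (m # xs) y"
    by auto
  show ?case
  proof (rule ccontr)
    assume "n \<noteq> z"
    then consider "n < z" | "z < n" by arith
    then show False
    proof cases
      case 1 then obtain y where "y > 0" "eval f (n # xs) y"
        using z by blast
      then show False using eval_mu.IH(1) by fastforce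
    next
      case 2 then obtain y where "y > 0" "\<forall>w. eval f (z # xs) w \<longrightarrow> y = w"
        using eval_mu.IH(2) by blast
      then show False using z by fastforce
    qed
  qed
qed

definition cmp :: "nat \<Rightarrow> recf \<Rightarrow> (nat list \<Rightarrow> nat) \<Rightarrow> bool" where
  "cmp N c f \<longleftrightarrow> (\<forall>xs. length xs = N \<longrightarrow> eval c xs (f xs))"

definition prc :: "nat \<Rightarrow> (nat list \<Rightarrow> nat) \<Rightarrow> bool" where
  "prc N f \<longleftrightarrow> (\<exists>c. cmp N c f)"

lemma prc_cong: "prc N f \<Longrightarrow> (\<And>xs. length xs = N \<Longrightarrow> f xs = g xs) \<Longrightarrow> prc N g"
  unfolding prc_def cmp_def by metis

lemma prc_zero: "prc N (\<lambda>xs. 0)"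
  unfolding prc_def cmp_def by (auto intro: eval_zero)

lemma prc_Suc: "prc N f \<Longrightarrow> prc N (\<lambda>xs. Suc (f xs))"
  unfolding prc_def cmp_def
  by (metis (no_types, lifting) eval_comp eval_succ list.rel_inject(2) list_all2_Nil)

lemma prc_const: "prc N (\<lambda>xs. n)"
  by (induction n) (auto intro: prc_zero prc_Suc)

lemma prc_proj: "i < N \<Longrightarrow> prc N (\<lambda>xs. xs ! i)"
  unfolding prc_def cmp_def by (auto intro!: exI[of _ "Proj i"] eval_proj)

lemma prc_proj_tl: "Suc j < N \<Longrightarrow> prc N (\<lambda>xs. tl xs ! j)"
  apply (rule prc_cong[OF prc_proj[of "Suc j"]], simp)
  by (case_tac xs) auto

lemma prc_proj_tl2: "Suc (Suc j) < N \<Longrightarrow> prc N (\<lambda>xs. tl (tl xs) ! j)"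
  apply (rule prc_cong[OF prc_proj[of "Suc (Suc j)"]], simp)
  by (case_tac xs; case_tac "tl xs") auto

lemma prc_proj_tl3: "Suc (Suc (Suc j)) < N \<Longrightarrow> prc N (\<lambda>xs. tl (tl (tl xs)) ! j)"
  apply (rule prc_cong[OF prc_proj[of "Suc (Suc (Suc j))"]], simp)
  by (case_tac xs; case_tac "tl xs"; case_tac "tl (tl xs)") auto

lemma prc_comp_list:
  assumes h: "prc (length gs) h" and gs: "\<forall>g\<in>set gs. prc N g"
  shows "prc N (\<lambda>xs. h (map (\<lambda>g. g xs) gs))"
proof -
  from gs have "\<exists>cs. list_all2 (\<lambda>c g. cmp N c g) cs gs"
  proof (induction gs)
    case Nil then show ?case by auto
  next
    case (Cons g gs)
    then obtain cs c where "list_all2 (\<lambda>c g. cmp N c g) cs gs" "cmp N c g" unfolding prc_def by auto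
    then show ?case by (intro exI[of _ "c # cs"]) auto
  qed
  then obtain cs where cs: "list_all2 (\<lambda>c g. cmp N c g) cs gs" by blast
  from h obtain ch where ch: "cmp (length gs) ch h" unfolding prc_def by auto
  show ?thesis unfolding prc_def cmp_def
  proof (intro exI[of _ "Comp ch cs"] allI impI)
    fix xs :: "nat list" assume N: "length xs = N"
    have "list_all2 (\<lambda>g y. eval g xs y) cs (map (\<lambda>g. g xs) gs)"
      using cs N by (induction rule: list_all2_induct) (auto simp: cmp_def)
    moreover have "eval ch (map (\<lambda>g. g xs) gs) (h (map (\<lambda>g. g xs) gs))"
      using ch by (simp add: cmp_def)
    ultimately show "eval (Comp ch cs) xs (h (map (\<lambda>g. g xs) gs))" by (rule eval_comp)
  qed
qed

lemma prc_comp1: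
  assumes "prc 1 (\<lambda>ys. h (ys ! 0))" "prc N f"
  shows "prc N (\<lambda>xs. h (f xs))"
  using prc_comp_list[of "[f]" "\<lambda>ys. h (ys ! 0)" N] assms by simp

lemma prc_comp2:
  assumes "prc 2 (\<lambda>ys. h (ys ! 0) (ys ! 1))" "prc N f" "prc N g"
  shows "prc N (\<lambda>xs. h (f xs) (g xs))"
  using prc_comp_list[of "[f, g]" "\<lambda>ys. h (ys ! 0) (ys ! 1)" N] assms by (simp add: numeral_2_eq_2)

lemma prc_comp3:
  assumes "prc 3 (\<lambda>ys. h (ys ! 0) (ys ! 1) (ys ! 2))" "prc N f" "prc N g" "prc N k"
  shows "prc N (\<lambda>xs. h (f xs) (g xs) (k xs))"
  using prc_comp_list[of "[f, g, k]" "\<lambda>ys. h (ys ! 0) (ys ! 1) (ys ! 2)" N] assms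
  by (simp add: numeral_3_eq_3 numeral_2_eq_2)

lemma prc_prim:
  assumes f: "prc N f" and g: "prc (Suc (Suc N)) g"
  shows "prc (Suc N) (\<lambda>xs. rec_nat (f (tl xs)) (\<lambda>m y. g (m # y # tl xs)) (xs ! 0))"
proof -
  from f g obtain cf cg where cf: "cmp N cf f" and cg: "cmp (Suc (Suc N)) cg g" unfolding prc_def by auto
  have "eval (Prim cf cg) (n # ys) (rec_nat (f ys) (\<lambda>m y. g (m # y # ys)) n)" if "length ys = N" for n ys
  proof (induction n)
    case 0 then show ?case using cf that by (auto simp: cmp_def intro: eval_prim0)
  next
    case (Suc n) then show ?case using cg that by (auto simp: cmp_def intro: eval_primS)
  qed
  then show ?thesis unfolding prc_def cmp_def
    by (intro exI[of _ "Prim cf cg"] allI impI) (case_tac xs; auto)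
qed

lemma map_nth_upt: "length xs = N \<Longrightarrow> map (\<lambda>j. xs ! (j + k)) [0..<N - k] = drop k xs"
  by (rule nth_equalityI) (auto simp: add.commute)

lemma map_nth_upt0: "map (\<lambda>j. xs ! j) [0..<length xs] = xs"
  by (rule nth_equalityI) auto

lemma prc_push:
  assumes "prc (Suc N) H" "prc N b"
  shows "prc N (\<lambda>xs. H (b xs # xs))"
proof -
  have "prc N (\<lambda>xs. H (map (\<lambda>g. g xs) (b # map (\<lambda>j xs. xs ! j) [0..<N])))"
    by (rule prc_comp_list) (use assms in \<open>auto intro: prc_proj\<close>)
  then show ?thesis
    by (rule prc_cong) (simp add: o_def, metis map_nth)
qed

lemma prc_shift:
  assumes "prc (Suc N) H"
  shows "prc (Suc (Suc N)) (\<lambda>ys. H (ys ! 0 # tl (tl ys)))"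
proof -
  have "prc (Suc (Suc N)) (\<lambda>ys. H (map (\<lambda>g. g ys) ((\<lambda>ys. ys ! 0) # map (\<lambda>j ys. ys ! (j + 2)) [0..<N])))"
    by (rule prc_comp_list) (use assms in \<open>auto intro: prc_proj\<close>)
  then show ?thesis
  proof (rule prc_cong)
    fix ys :: "nat list" assume l: "length ys = Suc (Suc N)"
    have "map (\<lambda>j. ys ! (j + 2)) [0..<N] = drop 2 ys"
      using map_nth_upt[OF l, of 2] by simp
    then show "H (map (\<lambda>g. g ys) ((\<lambda>ys. ys ! 0) # map (\<lambda>j ys. ys ! (j + 2)) [0..<N])) = H (ys ! 0 # tl (tl ys))"
      by (simp add: o_def numeral_2_eq_2 drop_Suc)
  qed
qed



lemma prc_weak: "prc N g \<Longrightarrow> prc (Suc N) (\<lambda>ys. g (tl ys))"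
proof -
  assume g: "prc N g"
  have "prc (Suc N) (\<lambda>ys. g (map (\<lambda>h. h ys) (map (\<lambda>j ys. ys ! (j + 1)) [0..<N])))"
    by (rule prc_comp_list) (use g in \<open>auto intro: prc_proj\<close>)
  then show ?thesis
  proof (rule prc_cong)
    fix ys :: "nat list" assume l: "length ys = Suc N"
    have "map (\<lambda>j. ys ! (j + 1)) [0..<N] = drop 1 ys"
      using map_nth_upt[OF l, of 1] by simp
    then show "g (map (\<lambda>h. h ys) (map (\<lambda>j ys. ys ! (j + 1)) [0..<N])) = g (tl ys)"
      by (simp add: o_def drop_Suc)
  qed
qed

lemma prc_cong2: "prc M f \<Longrightarrow> M = N \<Longrightarrow> (\<And>xs. length xs = N \<Longrightarrow> f xs = g xs) \<Longrightarrow> prc N g"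
  using prc_cong by blast

lemma rec_add: "rec_nat b (\<lambda>m y. Suc y) a = a + b" by (induction a) auto
lemma rec_mul: "rec_nat 0 (\<lambda>m y. y + b) a = a * (b::nat)" by (induction a) auto
lemma rec_pred: "rec_nat b (\<lambda>m y. y - 1) a = (b::nat) - a" by (induction a) auto
lemma rec_funpow: "rec_nat b (\<lambda>m y. F y) a = (F ^^ a) b" by (induction a) auto
lemma rec_pred': "rec_nat b (\<lambda>m y. y - Suc 0) a = (b::nat) - a" by (induction a) auto
lemma rec_pow': "rec_nat (Suc 0) (\<lambda>m y. y * b) a = (b::nat) ^ a" by (induction a) (simp_all add: power_commutes)
lemma rec_pow: "rec_nat 1 (\<lambda>m y. y * b) a = (b::nat) ^ a" unfolding One_nat_def by (rule rec_pow')
lemmas rec_lemmas = rec_pow' rec_pred' rec_add rec_mul rec_pred rec_pow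

lemma len2: "length xs = 2 \<Longrightarrow> xs = [xs!0, xs!1]"
  by (cases xs; cases "tl xs") (auto simp: numeral_2_eq_2)
lemma len1: "length xs = 1 \<Longrightarrow> xs = [xs!0]"
  by (cases xs) auto
lemma len3: "length xs = 3 \<Longrightarrow> xs = [xs!0, xs!1, xs!2]"
  by (cases xs; cases "tl xs"; cases "tl (tl xs)") (auto simp: numeral_3_eq_3)

lemma prc_add2: "prc 2 (\<lambda>xs. xs!0 + xs!1)"
proof -
  have "prc (Suc 1) (\<lambda>xs. rec_nat (tl xs ! 0) (\<lambda>m y. Suc ((m # y # tl xs) ! 1)) (xs ! 0))"
    by (rule prc_prim[OF prc_proj prc_Suc[OF prc_proj]]) simp_all
  then show ?thesis
  proof (rule prc_cong2, simp)
    fix xs :: "nat list" assume "length xs = 2"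
    then obtain a b where "xs = [a, b]" by (metis len2)
    then show "rec_nat (tl xs ! 0) (\<lambda>m y. Suc ((m # y # tl xs) ! 1)) (xs ! 0) = xs ! 0 + xs ! 1"
      by (simp add: rec_lemmas)
  qed
qed

lemma prc_I_add: "prc N f \<Longrightarrow> prc N g \<Longrightarrow> prc N (\<lambda>xs. f xs + g xs)"
  by (rule prc_comp2[where h="(+)", OF prc_add2])

lemma prc_mult2: "prc 2 (\<lambda>xs. xs!0 * xs!1)"
proof -
  have "prc (Suc 1) (\<lambda>xs. rec_nat 0 (\<lambda>m y. (m # y # tl xs) ! 1 + (m # y # tl xs) ! 2) (xs ! 0))"
    by (rule prc_prim[OF prc_zero prc_I_add[OF prc_proj prc_proj]]) simp_all
  then show ?thesis
  proof (rule prc_cong2, simp)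
    fix xs :: "nat list" assume "length xs = 2"
    then obtain a b where "xs = [a, b]" by (metis len2)
    then show "rec_nat 0 (\<lambda>m y. (m # y # tl xs) ! 1 + (m # y # tl xs) ! 2) (xs ! 0) = xs ! 0 * xs ! 1"
      by (simp add: rec_lemmas)
  qed
qed

lemma prc_I_mult: "prc N f \<Longrightarrow> prc N g \<Longrightarrow> prc N (\<lambda>xs. f xs * g xs)"
  by (rule prc_comp2[where h="(*)", OF prc_mult2])

lemma prc_pred: "prc 1 (\<lambda>xs. xs!0 - 1)"
proof -
  have "prc (Suc 0) (\<lambda>xs. rec_nat 0 (\<lambda>m y. (m # y # tl xs) ! 0) (xs ! 0))"
    by (rule prc_prim[OF prc_zero prc_proj]) simp_all
  then show ?thesis
  proof (rule prc_cong2, simp)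
    fix xs :: "nat list" assume "length xs = 1"
    then obtain a where "xs = [a]" by (metis len1)
    then show "rec_nat 0 (\<lambda>m y. (m # y # tl xs) ! 0) (xs ! 0) = xs ! 0 - 1"
      by (cases a) auto
  qed
qed

lemma prc_minus2: "prc 2 (\<lambda>xs. xs!0 - xs!1)"
proof -
  have "prc (Suc 1) (\<lambda>xs. rec_nat (tl xs ! 0) (\<lambda>m y. (m # y # tl xs) ! 1 - 1) (xs ! 0))"
    by (rule prc_prim[OF prc_proj prc_comp1[where h="\<lambda>x. x - 1", OF prc_pred prc_proj]]) simp_all
  then have "prc 2 (\<lambda>xs. xs!1 - xs!0)"
  proof (rule prc_cong2, simp)
    fix xs :: "nat list" assume "length xs = 2"
    then obtain a b where "xs = [a, b]" by (metis len2)
    then show "rec_nat (tl xs ! 0) (\<lambda>m y. (m # y # tl xs) ! 1 - 1) (xs ! 0) = xs ! 1 - xs ! 0"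
      by (simp add: rec_lemmas)
  qed
  from prc_comp2[where h="\<lambda>a b. b - a", OF this, of 2 "\<lambda>xs. xs!1" "\<lambda>xs. xs!0"]
  show ?thesis by (simp add: prc_proj)
qed

lemma prc_I_minus: "prc N f \<Longrightarrow> prc N g \<Longrightarrow> prc N (\<lambda>xs. f xs - g xs)"
  by (rule prc_comp2[where h="(-)", OF prc_minus2])

lemma prc_cond3: "prc 3 (\<lambda>xs. if xs!0 = 0 then xs!1 else xs!2)"
proof -
  have "prc (Suc 2) (\<lambda>xs. rec_nat (tl xs ! 0) (\<lambda>m y. (m # y # tl xs) ! 3) (xs ! 0))"
    by (rule prc_prim[OF prc_proj prc_proj]) simp_all
  then show ?thesis
  proof (rule prc_cong2, simp)
    fix xs :: "nat list" assume "length xs = 3"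
    then obtain a b c where "xs = [a, b, c]" by (metis len3)
    then show "rec_nat (tl xs ! 0) (\<lambda>m y. (m # y # tl xs) ! 3) (xs ! 0) = (if xs!0 = 0 then xs!1 else xs!2)"
      by (cases a) (auto simp: numeral_3_eq_3)
  qed
qed

definition prp :: "nat \<Rightarrow> (nat list \<Rightarrow> bool) \<Rightarrow> bool" where
  "prp N P \<longleftrightarrow> prc N (\<lambda>xs. if P xs then 1 else 0)"

lemma prc_I_if: "prp N P \<Longrightarrow> prc N f \<Longrightarrow> prc N g \<Longrightarrow> prc N (\<lambda>xs. if P xs then f xs else g xs)"
  unfolding prp_def
  by (rule prc_cong[OF prc_comp3[where h="\<lambda>a b c. if a = 0 then b else c", OF prc_cond3,
      of N "\<lambda>xs. if P xs then 1 else 0" g f]]) auto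

lemma prp_I_eq: "prc N f \<Longrightarrow> prc N g \<Longrightarrow> prp N (\<lambda>xs. f xs = g xs)"
  unfolding prp_def
  by (rule prc_cong[where f="\<lambda>xs. 1 - ((f xs - g xs) + (g xs - f xs))"])
    (auto intro!: prc_I_minus prc_I_add prc_const)

lemma prp_I_le: "prc N f \<Longrightarrow> prc N g \<Longrightarrow> prp N (\<lambda>xs. f xs \<le> g xs)"
  unfolding prp_def
  by (rule prc_cong[where f="\<lambda>xs. 1 - (f xs - g xs)"]) (auto intro: prc_I_minus prc_const)

lemma prp_I_less: "prc N f \<Longrightarrow> prc N g \<Longrightarrow> prp N (\<lambda>xs. f xs < g xs)"
  unfolding prp_def
  by (rule prc_cong[where f="\<lambda>xs. 1 - (Suc (f xs) - g xs)"]) (auto intro!: prc_I_minus prc_const prc_Suc)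

lemma prp_I_not: "prp N P \<Longrightarrow> prp N (\<lambda>xs. \<not> P xs)"
  unfolding prp_def
  by (rule prc_cong[where f="\<lambda>xs. 1 - (if P xs then 1 else 0)"]) (auto intro: prc_I_minus prc_const)

lemma prp_I_conj: "prp N P \<Longrightarrow> prp N Q \<Longrightarrow> prp N (\<lambda>xs. P xs \<and> Q xs)"
  unfolding prp_def
  by (rule prc_cong[where f="\<lambda>xs. (if P xs then 1 else 0) * (if Q xs then 1 else 0)"]) (auto intro: prc_I_mult)

lemma prp_I_disj: "prp N P \<Longrightarrow> prp N Q \<Longrightarrow> prp N (\<lambda>xs. P xs \<or> Q xs)"
  unfolding prp_def
  by (rule prc_cong[where f="\<lambda>xs. 1 - (1 - (if P xs then 1 else 0)) * (1 - (if Q xs then 1 else 0))"])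
    (auto intro!: prc_I_mult prc_I_minus prc_const)

lemma prp_I_imp: "prp N P \<Longrightarrow> prp N Q \<Longrightarrow> prp N (\<lambda>xs. P xs \<longrightarrow> Q xs)"
proof -
  assume "prp N P" "prp N Q"
  then have "prp N (\<lambda>xs. \<not> P xs \<or> Q xs)" by (rule prp_I_disj[OF prp_I_not])
  then show ?thesis by (simp only: imp_conv_disj)
qed

lemma prp_I_const: "prp N (\<lambda>xs. P)"
  unfolding prp_def by (rule prc_const)

lemma rec_sum: "rec_nat 0 (\<lambda>m y. y + F m) n = (\<Sum>i<n. F i)"
  by (induction n) auto

lemma prc_I_sum:
  assumes F: "prc (Suc N) (\<lambda>ys. F (ys!0) (tl ys))" and b: "prc N b"
  shows "prc N (\<lambda>xs. \<Sum>i<b xs. F i xs)"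
proof -
  have "prc (Suc (Suc N)) (\<lambda>ys. ys ! 1 + F ((ys!0 # tl (tl ys)) ! 0) (tl (ys!0 # tl (tl ys))))"
    by (rule prc_I_add[OF prc_proj prc_shift[OF F]]) simp
  then have "prc (Suc (Suc N)) (\<lambda>ys. ys ! 1 + F (ys!0) (tl (tl ys)))" by simp
  from prc_prim[OF prc_zero this]
  have "prc (Suc N) (\<lambda>xs. rec_nat 0 (\<lambda>m y. y + F m (tl xs)) (xs ! 0))" by simp
  then have "prc (Suc N) (\<lambda>xs. \<Sum>i<xs!0. F i (tl xs))"
    by (simp add: rec_sum)
  from prc_push[OF this b] show ?thesis by simp
qed

lemma prp_I_ball:
  assumes F: "prp (Suc N) (\<lambda>ys. P (ys!0) (tl ys))" and b: "prc N b"
  shows "prp N (\<lambda>xs. \<forall>i<b xs. P i xs)"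
proof -
  have "prc N (\<lambda>xs. \<Sum>i<b xs. (if \<not> P i xs then 1 else 0))"
    by (rule prc_I_sum[OF _ b]) (use prp_I_not[OF F] in \<open>simp add: prp_def\<close>)
  then have "prp N (\<lambda>xs. (\<Sum>i<b xs. (if \<not> P i xs then 1 else 0)) = (0::nat))"
    by (rule prp_I_eq[OF _ prc_const])
  then show ?thesis unfolding prp_def by (rule prc_cong) auto
qed

lemma prp_I_bex:
  assumes F: "prp (Suc N) (\<lambda>ys. P (ys!0) (tl ys))" and b: "prc N b"
  shows "prp N (\<lambda>xs. \<exists>i<b xs. P i xs)"
proof -
  have "prp N (\<lambda>xs. \<not> (\<forall>i<b xs. \<not> P i xs))"
    by (rule prp_I_not[OF prp_I_ball[OF prp_I_not[OF F] b]])
  then show ?thesis by simp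
qed

lemma prc_funpow2: "prc 1 (\<lambda>ys. F (ys!0)) \<Longrightarrow> prc 2 (\<lambda>xs. (F ^^ (xs!0)) (xs!1))"
proof -
  assume F: "prc 1 (\<lambda>ys. F (ys!0))"
  have "prc (Suc 1) (\<lambda>xs. rec_nat (tl xs ! 0) (\<lambda>m y. F ((m # y # tl xs) ! 1)) (xs ! 0))"
    by (rule prc_prim[OF prc_proj prc_comp1[OF F prc_proj]]) simp_all
  then show ?thesis
  proof (rule prc_cong2, simp)
    fix xs :: "nat list" assume "length xs = 2"
    then obtain a b where "xs = [a, b]" by (metis len2)
    then show "rec_nat (tl xs ! 0) (\<lambda>m y. F ((m # y # tl xs) ! 1)) (xs ! 0) = (F ^^ (xs!0)) (xs!1)"
      by (simp add: rec_funpow)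
  qed
qed

lemma prc_I_funpow: "prc 1 (\<lambda>ys. F (ys!0)) \<Longrightarrow> prc N n \<Longrightarrow> prc N w \<Longrightarrow> prc N (\<lambda>xs. (F ^^ n xs) (w xs))"
  by (rule prc_comp2[where h="\<lambda>a b. (F ^^ a) b", OF prc_funpow2])

lemma prc_pow2: "prc 2 (\<lambda>xs. xs!0 ^ xs!1)"
proof -
  have "prc (Suc 1) (\<lambda>xs. rec_nat 1 (\<lambda>m y. (m # y # tl xs) ! 1 * (m # y # tl xs) ! 2) (xs ! 0))"
    by (rule prc_prim[OF prc_const prc_I_mult[OF prc_proj prc_proj]]) simp_all
  then have "prc 2 (\<lambda>xs. xs!1 ^ xs!0)"
  proof (rule prc_cong2, simp)
    fix xs :: "nat list" assume "length xs = 2"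
    then obtain a b where "xs = [a, b]" by (metis len2)
    then show "rec_nat 1 (\<lambda>m y. (m # y # tl xs) ! 1 * (m # y # tl xs) ! 2) (xs ! 0) = xs ! 1 ^ xs ! 0"
      by (simp add: rec_lemmas)
  qed
  from prc_comp2[where h="\<lambda>a b. b ^ a", OF this, of 2 "\<lambda>xs. xs!1" "\<lambda>xs. xs!0"]
  show ?thesis by (simp add: prc_proj)
qed

lemma prc_I_pow: "prc N f \<Longrightarrow> prc N g \<Longrightarrow> prc N (\<lambda>xs. f xs ^ g xs)"
  by (rule prc_comp2[where h="(^)", OF prc_pow2])

lemma div_as_sum: "(x::nat) div y = (if y = 0 then 0 else \<Sum>i<x. if (i + 1) * y \<le> x then 1 else 0)"
proof (cases "y = 0")
  case False
  have "(\<Sum>i<x. if (i + 1) * y \<le> x then 1 else 0) = card {i. i < x \<and> (i + 1) * y \<le> x}"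
    by (simp add: sum.If_cases Int_def)
  also have "{i. i < x \<and> (i + 1) * y \<le> x} = {..<x div y}"
  proof -
    have "(i + 1) * y \<le> x \<longleftrightarrow> i < x div y" for i
    proof -
      have "i < x div y \<longleftrightarrow> Suc i \<le> x div y" by (rule less_eq_Suc_le)
      also have "\<dots> \<longleftrightarrow> Suc i * y \<le> x" by (rule less_eq_div_iff_mult_less_eq) (use False in simp)
      finally show ?thesis by simp
    qed
    moreover have "x div y \<le> x" by simp
    ultimately have eq: "(i < x \<and> (i + 1) * y \<le> x) \<longleftrightarrow> i < x div y" for i
      by (meson order_less_le_trans)
    show ?thesis by (rule set_eqI) (simp only: mem_Collect_eq lessThan_iff eq)
  qed
  finally have S: "(\<Sum>i<x. if (i + 1) * y \<le> x then 1 else 0) = x div y" by (simp only: card_lessThan)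
  show ?thesis using False by (simp only: S if_False)
qed simp

lemma prc_I_div: "prc N f \<Longrightarrow> prc N g \<Longrightarrow> prc N (\<lambda>xs. f xs div g xs)"
proof -
  assume f: "prc N f" and g: "prc N g"
  have "prc N (\<lambda>xs. if g xs = 0 then 0 else \<Sum>i<f xs. if (i + 1) * g xs \<le> f xs then 1 else 0)"
    apply (rule prc_I_if[OF prp_I_eq[OF g prc_const] prc_const])
    apply (rule prc_I_sum[OF _ f])
    apply (rule prc_I_if[OF _ prc_const prc_const])
    apply (rule prp_I_le)
     apply (rule prc_I_mult[OF prc_I_add[OF prc_proj prc_const]], simp)
     apply (rule prc_weak[OF g])
    apply (rule prc_weak[OF f])
    done
  then show ?thesis by (simp add: div_as_sum)
qed

lemma mod_alt: "(x::nat) - y * (x div y) = x mod y"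
  by (metis minus_mult_div_eq_mod mult.commute)

lemma prc_I_mod: "prc N f \<Longrightarrow> prc N g \<Longrightarrow> prc N (\<lambda>xs. f xs mod g xs)"
proof -
  assume f: "prc N f" and g: "prc N g"
  have "prc N (\<lambda>xs. f xs - g xs * (f xs div g xs))"
    by (rule prc_I_minus[OF f prc_I_mult[OF g prc_I_div[OF f g]]])
  then show ?thesis by (simp add: mod_alt)
qed



lemmas prc_I = prc_I_add prc_I_mult prc_I_minus prc_I_div prc_I_mod prc_I_pow prc_I_if prc_I_sum
  prc_I_funpow prc_Suc prc_const prc_proj prc_proj_tl prc_proj_tl2 prc_proj_tl3
  prp_I_eq prp_I_le prp_I_less prp_I_not prp_I_conj prp_I_disj prp_I_imp prp_I_const
  prp_I_ball prp_I_bex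

definition pfst :: "nat \<Rightarrow> nat" where "pfst z = fst (prod_decode z)"
definition psnd :: "nat \<Rightarrow> nat" where "psnd z = snd (prod_decode z)"
definition pe :: "nat \<Rightarrow> nat \<Rightarrow> nat" where "pe a b = prod_encode (a, b)"

lemma pe_alt: "pe a b = (a + b) * (a + b + 1) div 2 + a"
  by (simp add: pe_def prod_encode_def triangle_def)

lemma prc_pe2: "prc 2 (\<lambda>xs. pe (xs!0) (xs!1))"
  unfolding pe_alt by (intro prc_I; simp)

lemma prc_I_pe: "prc N f \<Longrightarrow> prc N g \<Longrightarrow> prc N (\<lambda>xs. pe (f xs) (g xs))"
  by (rule prc_comp2[OF prc_pe2])

lemma pfst_pe[simp]: "pfst (pe a b) = a" and psnd_pe[simp]: "psnd (pe a b) = b"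
  by (simp_all add: pfst_def psnd_def pe_def)

lemma pe_eq[simp]: "pe a b = pe c d \<longleftrightarrow> a = c \<and> b = d"
  by (simp add: pe_def)

lemma pe_pfst_psnd[simp]: "pe (pfst z) (psnd z) = z"
  by (simp add: pfst_def psnd_def pe_def)

lemma pfst_le: "pfst z \<le> z" and psnd_le: "psnd z \<le> z"
  by (metis le_prod_encode_1 pe_def pe_pfst_psnd) (metis le_prod_encode_2 pe_def pe_pfst_psnd)

lemma pfst_sum: "pfst z = (\<Sum>a<Suc z. if \<exists>b<Suc z. pe a b = z then a else 0)"
proof -
  have "(\<exists>b<Suc z. pe a b = z) \<longleftrightarrow> a = pfst z" for a
    using psnd_le[of z] by (metis le_imp_less_Suc pe_pfst_psnd pfst_pe)
  then have "(\<Sum>a<Suc z. if \<exists>b<Suc z. pe a b = z then a else 0) = (\<Sum>a<Suc z. if a = pfst z then a else 0)"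
    by simp
  also have "\<dots> = pfst z" using pfst_le[of z] by (simp add: sum.delta')
  finally show ?thesis by simp
qed

lemma psnd_sum: "psnd z = (\<Sum>b<Suc z. if \<exists>a<Suc z. pe a b = z then b else 0)"
proof -
  have "(\<exists>a<Suc z. pe a b = z) \<longleftrightarrow> b = psnd z" for b
    using pfst_le[of z] by (metis le_imp_less_Suc pe_pfst_psnd psnd_pe)
  then have "(\<Sum>b<Suc z. if \<exists>a<Suc z. pe a b = z then b else 0) = (\<Sum>b<Suc z. if b = psnd z then b else 0)"
    by simp
  also have "\<dots> = psnd z" using psnd_le[of z] by (simp add: sum.delta')
  finally show ?thesis by simp
qed

lemma prc_pfst1: "prc 1 (\<lambda>xs. pfst (xs!0))"
  unfolding pfst_sum by (intro prc_I prc_I_pe; simp)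

lemma prc_psnd1: "prc 1 (\<lambda>xs. psnd (xs!0))"
  unfolding psnd_sum by (intro prc_I prc_I_pe; simp)

lemma prc_I_pfst: "prc N f \<Longrightarrow> prc N (\<lambda>xs. pfst (f xs))"
  by (rule prc_comp1[OF prc_pfst1])
lemma prc_I_psnd: "prc N f \<Longrightarrow> prc N (\<lambda>xs. psnd (f xs))"
  by (rule prc_comp1[OF prc_psnd1])

lemma pfst0[simp]: "pfst 0 = 0" and psnd0[simp]: "psnd 0 = 0"
  using pfst_pe[of 0 0] psnd_pe[of 0 0] by (simp_all add: pe_alt)

definition lhd :: "nat \<Rightarrow> nat" where "lhd w = pfst (w - 1)"
definition ltl :: "nat \<Rightarrow> nat" where "ltl w = psnd (w - 1)"
definition lcons :: "nat \<Rightarrow> nat \<Rightarrow> nat" where "lcons x w = Suc (pe x w)"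
definition lnth :: "nat \<Rightarrow> nat \<Rightarrow> nat" where "lnth w i = lhd ((ltl ^^ i) w)"
definition llen :: "nat \<Rightarrow> nat" where "llen w = (\<Sum>i<w. if (ltl ^^ i) w \<noteq> 0 then 1 else 0)"

lemma lcons_enc: "lcons x (list_encode xs) = list_encode (x # xs)"
  by (simp add: lcons_def pe_def)

lemma decode_lcons[simp]: "list_decode (lcons x w) = x # list_decode w"
  by (metis lcons_enc list_decode_inverse list_encode_inverse)

lemma list_decode_eq_Nil[simp]: "list_decode w = [] \<longleftrightarrow> w = 0"
  by (metis list_decode.simps(1) list_decode_inverse list_encode.simps(1))

lemma w_pos_lcons: "w \<noteq> 0 \<Longrightarrow> w = lcons (lhd w) (ltl w)"
  unfolding lcons_def lhd_def ltl_def by simp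

lemma ltl_decode: "list_decode (ltl w) = tl (list_decode w)"
proof (cases "w = 0")
  case True then show ?thesis by (simp add: ltl_def)
next
  case False
  then have "list_decode w = lhd w # list_decode (ltl w)" by (metis w_pos_lcons decode_lcons)
  then show ?thesis by simp
qed

lemma lhd_decode: "w \<noteq> 0 \<Longrightarrow> lhd w = hd (list_decode w)"
  by (metis w_pos_lcons decode_lcons list.sel(1))

lemma ltl_pow_decode: "list_decode ((ltl ^^ i) w) = drop i (list_decode w)"
  by (induction i) (simp_all add: ltl_decode drop_Suc tl_drop)

lemma lnth_decode: "i < length (list_decode w) \<Longrightarrow> lnth w i = list_decode w ! i"
proof -
  assume i: "i < length (list_decode w)"
  then have "(ltl ^^ i) w \<noteq> 0" using ltl_pow_decode[of i w]
    by (metis drop_eq_Nil leD list_decode_eq_Nil)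
  then have "lnth w i = hd (drop i (list_decode w))" by (simp add: lnth_def lhd_decode ltl_pow_decode)
  then show ?thesis using i by (simp add: hd_drop_conv_nth)
qed

lemma len_le_enc: "length xs \<le> list_encode xs"
  by (induction xs) (auto simp: le_prod_encode_2 intro: le_trans[OF _ le_prod_encode_2])

lemma llen_decode: "llen w = length (list_decode w)"
proof -
  have "(ltl ^^ i) w \<noteq> 0 \<longleftrightarrow> i < length (list_decode w)" for i
    using ltl_pow_decode[of i w] by (metis drop_eq_Nil list_decode_eq_Nil not_le)
  then have "llen w = card {i. i < w \<and> i < length (list_decode w)}"
    by (simp add: llen_def sum.If_cases Int_def)
  also have "{i. i < w \<and> i < length (list_decode w)} = {..<length (list_decode w)}"
    using len_le_enc[of "list_decode w"] by auto
  finally show ?thesis by simp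
qed

lemma prc_lhd1: "prc 1 (\<lambda>xs. lhd (xs!0))"
  unfolding lhd_def by (intro prc_I prc_I_pfst; simp)
lemma prc_ltl1: "prc 1 (\<lambda>xs. ltl (xs!0))"
  unfolding ltl_def by (intro prc_I prc_I_psnd; simp)
lemma prc_I_lhd: "prc N f \<Longrightarrow> prc N (\<lambda>xs. lhd (f xs))"
  by (rule prc_comp1[OF prc_lhd1])
lemma prc_I_ltl: "prc N f \<Longrightarrow> prc N (\<lambda>xs. ltl (f xs))"
  by (rule prc_comp1[OF prc_ltl1])
lemma prc_lnth2: "prc 2 (\<lambda>xs. lnth (xs!0) (xs!1))"
  unfolding lnth_def by (intro prc_I prc_I_lhd prc_ltl1; simp)
lemma prc_I_lnth: "prc N f \<Longrightarrow> prc N g \<Longrightarrow> prc N (\<lambda>xs. lnth (f xs) (g xs))"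
  by (rule prc_comp2[OF prc_lnth2])
lemma prc_llen1: "prc 1 (\<lambda>xs. llen (xs!0))"
  unfolding llen_def by (intro prc_I prc_ltl1; simp)
lemma prc_I_llen: "prc N f \<Longrightarrow> prc N (\<lambda>xs. llen (f xs))"
  by (rule prc_comp1[OF prc_llen1])
lemma prc_lcons2: "prc 2 (\<lambda>xs. lcons (xs!0) (xs!1))"
  unfolding lcons_def by (intro prc_I prc_I_pe; simp)
lemma prc_I_lcons: "prc N f \<Longrightarrow> prc N g \<Longrightarrow> prc N (\<lambda>xs. lcons (f xs) (g xs))"
  by (rule prc_comp2[OF prc_lcons2])

lemmas prc_II = prc_I prc_I_pe prc_I_pfst prc_I_psnd prc_I_lhd prc_I_ltl prc_I_lnth prc_I_llen prc_I_lcons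



fun code :: "recf \<Rightarrow> nat" where
  "code Zero = pe 0 0"
| "code Succ = pe 1 0"
| "code (Proj i) = pe 2 i"
| "code (Comp f gs) = pe 3 (pe (code f) (list_encode (map code gs)))"
| "code (Prim f g) = pe 4 (pe (code f) (code g))"
| "code (Mu f) = pe 5 (code f)"

type_synonym jdg = "nat \<times> nat \<times> nat"

definition J :: "jdg set \<Rightarrow> jdg \<Rightarrow> bool" where
  "J S j = (case j of (fc, xc, y) \<Rightarrow>
     (if pfst fc = 0 then y = 0
      else if pfst fc = 1 then list_decode xc \<noteq> [] \<and> y = Suc (hd (list_decode xc))
      else if pfst fc = 2 then psnd fc < length (list_decode xc) \<and> y = list_decode xc ! psnd fc
      else if pfst fc = 3 then
        (\<exists>(f', yc, y')\<in>S. f' = pfst (psnd fc) \<and> y' = y \<and>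
            length (list_decode yc) = length (list_decode (psnd (psnd fc))) \<and>
            (\<forall>i<length (list_decode (psnd (psnd fc))).
               (list_decode (psnd (psnd fc)) ! i, xc, list_decode yc ! i) \<in> S))
      else if pfst fc = 4 then list_decode xc \<noteq> [] \<and>
        (if hd (list_decode xc) = 0 then (pfst (psnd fc), list_encode (tl (list_decode xc)), y) \<in> S
         else (\<exists>(f', xc', y')\<in>S. f' = fc \<and> xc' = list_encode ((hd (list_decode xc) - 1) # tl (list_decode xc)) \<and>
             (psnd (psnd fc), list_encode ((hd (list_decode xc) - 1) # y' # tl (list_decode xc)), y) \<in> S))
      else (psnd fc, list_encode (y # list_decode xc), 0) \<in> S \<and>
        (\<forall>m<y. \<exists>(f', xc', y')\<in>S. f' = psnd fc \<and> xc' = list_encode (m # list_decode xc) \<and> y' > 0)))"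

lemma J_mono: "J S j \<Longrightarrow> S \<subseteq> S' \<Longrightarrow> J S' j"
  unfolding J_def by (cases j) (clarsimp split: if_splits; blast)

definition valid :: "jdg list \<Rightarrow> bool" where
  "valid L \<longleftrightarrow> (\<forall>k<length L. J (set (take k L)) (L ! k))"

lemma valid_append: "valid L1 \<Longrightarrow> valid L2 \<Longrightarrow> valid (L1 @ L2)"
  unfolding valid_def
proof (intro allI impI)
  fix k assume v1: "\<forall>k<length L1. J (set (take k L1)) (L1 ! k)"
    and v2: "\<forall>k<length L2. J (set (take k L2)) (L2 ! k)" and k: "k < length (L1 @ L2)"
  show "J (set (take k (L1 @ L2))) ((L1 @ L2) ! k)"
  proof (cases "k < length L1")
    case True then show ?thesis using v1 by (simp add: nth_append)
  next
    case False
    then have "J (set (take (k - length L1) L2)) (L2 ! (k - length L1))" using v2 k by simp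
    then show ?thesis using False by (auto simp: nth_append elim!: J_mono)
  qed
qed

lemma valid_Nil: "valid []" by (simp add: valid_def)

lemma valid_snoc: "valid L \<Longrightarrow> J (set L) j \<Longrightarrow> valid (L @ [j])"
  unfolding valid_def by (auto simp: nth_append less_Suc_eq)

lemma valid_concat: "\<forall>L\<in>set Ls. valid L \<Longrightarrow> valid (concat Ls)"
  by (induction Ls) (auto intro: valid_append valid_Nil)

lemma code_inj: "code f = code g \<Longrightarrow> f = g"
proof (induction f arbitrary: g)
  case (Comp f gs)
  then show ?case
  proof (cases g)
    case (Comp f' gs')
    with Comp.prems have "code f = code f'" "map code gs = map code gs'" by (auto dest: inj_onD[OF inj_list_encode])
    then have "f = f'" "gs = gs'" using Comp.IH
      by (auto simp: list_eq_iff_nth_eq)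
    then show ?thesis using Comp by simp
  qed (use Comp.prems in auto)
qed (case_tac g; auto)+

lemma list_encode_0_iff[simp]: "list_encode xs = 0 \<longleftrightarrow> xs = []"
  by (cases xs) auto
lemma list_encode_pos_iff[simp]: "0 < list_encode xs \<longleftrightarrow> xs \<noteq> []"
  by (cases xs) auto

lemma J_code:
  "J S (code f, list_encode xs, y) \<longleftrightarrow>
    (case f of Zero \<Rightarrow> y = 0
     | Succ \<Rightarrow> xs \<noteq> [] \<and> y = Suc (hd xs)
     | Proj i \<Rightarrow> i < length xs \<and> y = xs ! i
     | Comp g gs \<Rightarrow> (\<exists>(f', yc, y')\<in>S. f' = code g \<and> y' = y \<and>
            length (list_decode yc) = length gs \<and>
            (\<forall>i<length gs. (code (gs ! i), list_encode xs, list_decode yc ! i) \<in> S))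
     | Prim g h \<Rightarrow> xs \<noteq> [] \<and>
        (if hd xs = 0 then (code g, list_encode (tl xs), y) \<in> S
         else (\<exists>(f', xc', y')\<in>S. f' = code f \<and> xc' = list_encode ((hd xs - 1) # tl xs) \<and>
             (code h, list_encode ((hd xs - 1) # y' # tl xs), y) \<in> S))
     | Mu g \<Rightarrow> (code g, list_encode (y # xs), 0) \<in> S \<and>
        (\<forall>m<y. \<exists>(f', xc', y')\<in>S. f' = code g \<and> xc' = list_encode (m # xs) \<and> y' > 0))"
  by (cases f) (simp_all add: J_def)

lemma sound_aux:
  assumes v: "valid L" and k: "k < length L"
  shows "\<forall>f xs y. L ! k = (code f, list_encode xs, y) \<longrightarrow> eval f xs y"
  using k
proof (induction k rule: less_induct)
  case (less k)
  define S where "S = set (take k L)"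
  have mem: "eval g zs v" if "(code g, list_encode zs, v) \<in> S" for g zs v
  proof -
    from that obtain k' where "k' < length (take k L)" "take k L ! k' = (code g, list_encode zs, v)"
      unfolding S_def by (metis in_set_conv_nth)
    then show ?thesis using less.IH[of k'] less.prems by auto
  qed
  have mem': "eval g (list_decode zc) v" if "(code g, zc, v) \<in> S" for g zc v
    using mem[of g "list_decode zc" v] that by simp
  show ?case
  proof (intro allI impI)
    fix f xs y assume Lk: "L ! k = (code f, list_encode xs, y)"
    have JJ0: "J S (code f, list_encode xs, y)" using v less.prems Lk unfolding valid_def S_def by metis
    note JJ = JJ0[unfolded J_code]
    show "eval f xs y"
    proof (cases f)
      case Zero then show ?thesis using JJ by (simp add: eval_zero)
    next
      case Succ
      then have "xs \<noteq> []" "y = Suc (hd xs)" using JJ by simp_all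
      then show ?thesis using Succ by (metis eval_succ list.collapse)
    next
      case (Proj i) then show ?thesis using JJ by (auto intro: eval_proj)
    next
      case (Comp g gs)
      then obtain yc where a: "(code g, yc, y) \<in> S" "length (list_decode yc) = length gs"
        "\<forall>i<length gs. (code (gs ! i), list_encode xs, list_decode yc ! i) \<in> S"
        using JJ by auto
      have "list_all2 (\<lambda>g y. eval g xs y) gs (list_decode yc)"
        using a(2,3) mem by (auto intro!: list_all2_all_nthI)
      moreover have "eval g (list_decode yc) y" using mem' a(1) by blast
      ultimately show ?thesis using Comp eval_comp by blast
    next
      case (Prim g h)
      then have ne: "xs \<noteq> []" using JJ by simp
      then obtain n xs' where xs: "xs = n # xs'" by (cases xs) auto
      show ?thesis
      proof (cases n)
        case 0
        then have "(code g, list_encode xs', y) \<in> S" using JJ Prim xs by simp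
        then show ?thesis using mem Prim xs 0 eval_prim0 by blast
      next
        case (Suc n')
        then obtain y' where "(code f, list_encode (n' # xs'), y') \<in> S"
            "(code h, list_encode (n' # y' # xs'), y) \<in> S"
          using JJ Prim xs by auto
        then have "eval (Prim g h) (n' # xs') y'" "eval h (n' # y' # xs') y" using mem Prim by blast+
        then have "eval (Prim g h) (Suc n' # xs') y" by (rule eval_primS)
        then show ?thesis using Prim xs Suc by simp
      qed
    next
      case (Mu g)
      then have a: "(code g, list_encode (y # xs), 0) \<in> S"
          "\<forall>m<y. \<exists>(f', xc', y')\<in>S. f' = code g \<and> xc' = list_encode (m # xs) \<and> y' > 0"
        using JJ by simp_all
      have "\<exists>v>0. eval g (m # xs) v" if "m < y" for m
      proof -
        from a(2) that obtain f' xc' y' where "(f', xc', y') \<in> S" "f' = code g" "xc' = list_encode (m # xs)" "y' > 0"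
          by blast
        then show ?thesis using mem by blast
      qed
      moreover have "eval g (y # xs) 0" using mem a(1) by blast
      ultimately have "eval (Mu g) xs y" by (intro eval_mu) auto
      then show ?thesis using Mu by simp
    qed
  qed
qed

lemma sound: "valid L \<Longrightarrow> (code f, list_encode xs, y) \<in> set L \<Longrightarrow> eval f xs y"
proof -
  assume v: "valid L" and m: "(code f, list_encode xs, y) \<in> set L"
  then obtain k where "k < length L" "L ! k = (code f, list_encode xs, y)" by (metis in_set_conv_nth)
  then show ?thesis using sound_aux[OF v] by blast
qed

lemma mk_cert: "valid L \<Longrightarrow> J (set L) j \<Longrightarrow> \<exists>L'. valid L' \<and> j \<in> set L'"
  by (intro exI[of _ "L @ [j]"]) (simp add: valid_snoc)

lemma list_all2_choose:
  "list_all2 (\<lambda>g y. \<exists>L. P g y L) gs ys \<Longrightarrow> \<exists>Ls. length Ls = length gs \<and> (\<forall>i<length gs. P (gs!i) (ys!i) (Ls!i))"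
proof (induction rule: list_all2_induct)
  case Nil then show ?case by simp
next
  case (Cons g gs y ys)
  then obtain L Ls where "P g y L" "length Ls = length gs" "\<forall>i<length gs. P (gs!i) (ys!i) (Ls!i)" by blast
  then show ?case by (intro exI[of _ "L # Ls"]) (auto simp: nth_Cons split: nat.split)
qed

lemma complete: "eval f xs y \<Longrightarrow> \<exists>L. valid L \<and> (code f, list_encode xs, y) \<in> set L"
proof (induction rule: eval.induct)
  case (eval_zero xs)
  show ?case by (rule mk_cert[OF valid_Nil]) (simp add: J_code[of _ Zero, simplified])
next
  case (eval_succ x xs)
  show ?case by (rule mk_cert[OF valid_Nil]) (simp only: J_code, simp)
next
  case (eval_proj i xs)
  show ?case by (rule mk_cert[OF valid_Nil]) (use eval_proj in \<open>simp add: J_code[of _ "Proj i", simplified]\<close>)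
next
  case (eval_comp xs gs ys f z)
  have "list_all2 (\<lambda>g y. \<exists>L. valid L \<and> (code g, list_encode xs, y) \<in> set L) gs ys"
    using eval_comp(1) by (auto elim: list_all2_mono)
  from list_all2_choose[OF this] obtain Ls where Ls: "length Ls = length gs"
    "\<forall>i<length gs. valid (Ls!i) \<and> (code (gs!i), list_encode xs, ys!i) \<in> set (Ls!i)" by blast
  from eval_comp obtain Lf where Lf: "valid Lf" "(code f, list_encode ys, z) \<in> set Lf" by blast
  have len: "length ys = length gs" using eval_comp(1) by (simp add: list_all2_lengthD)
  let ?L = "concat Ls @ Lf"
  have v: "valid ?L" using Ls Lf by (auto intro!: valid_append valid_concat simp: in_set_conv_nth)
  have sub: "set (Ls ! i) \<subseteq> set ?L" if "i < length gs" for i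
  proof -
    have "Ls ! i \<in> set Ls" using that Ls(1) by simp
    then show ?thesis by auto
  qed
  have "J (set ?L) (code (Comp f gs), list_encode xs, z)"
    unfolding J_code recf.case
  proof -
    have memL: "(code (gs!i), list_encode xs, ys!i) \<in> set ?L" if "i < length gs" for i
      using sub[OF that] Ls(2) that by blast
    have "(code f, list_encode ys, z) \<in> set ?L" using Lf(2) by simp
    then show "\<exists>(f', yc, y')\<in>set ?L. f' = code f \<and> y' = z \<and>
            length (list_decode yc) = length gs \<and>
            (\<forall>i<length gs. (code (gs ! i), list_encode xs, list_decode yc ! i) \<in> set ?L)"
      using len memL by (intro bexI[of _ "(code f, list_encode ys, z)"]) auto
  qed
  then show ?case by (rule mk_cert[OF v])
next
  case (eval_prim0 f xs y g)
  then obtain L where L: "valid L" "(code f, list_encode xs, y) \<in> set L" by blast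
  have "J (set L) (code (Prim f g), list_encode (0 # xs), y)"
    unfolding J_code recf.case using L(2) by simp
  then show ?case by (rule mk_cert[OF L(1)])
next
  case (eval_primS f g n xs y z)
  then obtain L1 L2 where L: "valid L1" "(code (Prim f g), list_encode (n # xs), y) \<in> set L1"
    "valid L2" "(code g, list_encode (n # y # xs), z) \<in> set L2" by blast
  have "J (set (L1 @ L2)) (code (Prim f g), list_encode (Suc n # xs), z)"
    unfolding J_code recf.case using L(2,4)
    by (auto simp del: list_encode.simps intro!: bexI[of _ "(code (Prim f g), list_encode (n # xs), y)"])
  then show ?case by (rule mk_cert[OF valid_append[OF L(1,3)]])
next
  case (eval_mu f n xs)
  from eval_mu.IH(1) obtain L0 where L0: "valid L0" "(code f, list_encode (n # xs), 0) \<in> set L0" by blast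
  have "\<forall>m\<in>{..<n}. \<exists>p. snd p > 0 \<and> valid (fst p) \<and> (code f, list_encode (m # xs), snd p) \<in> set (fst p)"
    using eval_mu.IH(2) by fastforce
  then obtain P where P: "\<forall>m\<in>{..<n}. snd (P m) > 0 \<and> valid (fst (P m)) \<and> (code f, list_encode (m # xs), snd (P m)) \<in> set (fst (P m))"
    by (metis bchoice)
  let ?L = "L0 @ concat (map (\<lambda>m. fst (P m)) [0..<n])"
  have v: "valid ?L" using L0 P by (auto intro!: valid_append valid_concat)
  have "J (set ?L) (code (Mu f), list_encode xs, n)"
    unfolding J_code recf.case
  proof (intro conjI allI impI)
    show "(code f, list_encode (n # xs), 0) \<in> set ?L" using L0 by simp
    fix m assume m: "m < n"
    then have "(code f, list_encode (m # xs), snd (P m)) \<in> set ?L" "snd (P m) > 0" using P by force+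
    then show "\<exists>(f', xc', y')\<in>set ?L. f' = code f \<and> xc' = list_encode (m # xs) \<and> y' > 0" by blast
  qed
  then show ?case by (rule mk_cert[OF v])
qed

definition Dset :: "nat \<Rightarrow> bool" where
  "Dset e \<longleftrightarrow> (\<exists>L. valid L \<and> (e, list_encode [e], 0) \<in> set L)"

lemma Dset_code: "Dset (code f) \<longleftrightarrow> eval f [code f] 0"
  unfolding Dset_def using sound complete by blast



definition dec3 :: "nat \<Rightarrow> jdg" where "dec3 t = (pfst t, pfst (psnd t), psnd (psnd t))"
definition enc3 :: "jdg \<Rightarrow> nat" where "enc3 j = (case j of (a, b, c) \<Rightarrow> pe a (pe b c))"

lemma dec3_enc3[simp]: "dec3 (enc3 j) = j"
  by (cases j) (simp add: dec3_def enc3_def)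
lemma dec3_eq: "dec3 t = (a, b, c) \<longleftrightarrow> t = pe a (pe b c)"
  by (auto simp: dec3_def)

definition LW :: "nat \<Rightarrow> jdg list" where "LW w = map dec3 (list_decode w)"

definition jf where "jf w k = pfst (lnth w k)"
definition jx where "jx w k = pfst (psnd (lnth w k))"
definition jy where "jy w k = psnd (psnd (lnth w k))"
definition mem :: "nat \<Rightarrow> nat \<Rightarrow> nat \<Rightarrow> nat \<Rightarrow> nat \<Rightarrow> bool" where
  "mem w k a b c \<longleftrightarrow> (\<exists>k'<k. lnth w k' = pe a (pe b c))"

lemma LW_nth: "k < llen w \<Longrightarrow> LW w ! k = (jf w k, jx w k, jy w k)"
  by (simp add: LW_def llen_decode lnth_decode jf_def jx_def jy_def dec3_def)

lemma LW_len: "length (LW w) = llen w" by (simp add: LW_def llen_decode)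

lemma in_take: "k \<le> length L \<Longrightarrow> x \<in> set (take k L) \<longleftrightarrow> (\<exists>k'<k. L ! k' = x)"
proof
  assume k: "k \<le> length L"
  assume "x \<in> set (take k L)"
  then obtain k' where "k' < length (take k L)" "take k L ! k' = x" by (metis in_set_conv_nth)
  then show "\<exists>k'<k. L ! k' = x" by auto
next
  assume k: "k \<le> length L"
  assume "\<exists>k'<k. L ! k' = x"
  then obtain k' where "k' < k" "L ! k' = x" by blast
  then have "take k L ! k' = x" "k' < length (take k L)" using k by auto
  then show "x \<in> set (take k L)" by (metis nth_mem)
qed

lemma bex_take: "k \<le> length L \<Longrightarrow> (\<exists>x\<in>set (take k L). Q x) \<longleftrightarrow> (\<exists>k'<k. Q (L ! k'))"
  using in_take by metis

lemma mem_iff: "k \<le> llen w \<Longrightarrow> (a, b, c) \<in> set (take k (LW w)) \<longleftrightarrow> mem w k a b c"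
proof -
  assume k: "k \<le> llen w"
  have "(a, b, c) \<in> set (take k (LW w)) \<longleftrightarrow> (\<exists>k'<k. LW w ! k' = (a, b, c))"
    using k by (simp add: in_take LW_len)
  also have "\<dots> \<longleftrightarrow> mem w k a b c"
    using k by (auto simp: mem_def LW_def llen_decode lnth_decode dec3_eq)
  finally show ?thesis .
qed

lemma bex_iff: "k \<le> llen w \<Longrightarrow> (\<exists>(f', yc, y')\<in>set (take k (LW w)). P f' yc y') \<longleftrightarrow> (\<exists>k'<k. P (jf w k') (jx w k') (jy w k'))"
proof -
  assume k: "k \<le> llen w"
  have "(\<exists>(f', yc, y')\<in>set (take k (LW w)). P f' yc y') \<longleftrightarrow> (\<exists>k'<k. case LW w ! k' of (f', yc, y') \<Rightarrow> P f' yc y')"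
    using k by (simp add: bex_take LW_len)
  also have "\<dots> \<longleftrightarrow> (\<exists>k'<k. P (jf w k') (jx w k') (jy w k'))"
    using k by (auto simp: LW_nth)
  finally show ?thesis .
qed

definition Jr :: "nat \<Rightarrow> nat \<Rightarrow> nat \<Rightarrow> nat \<Rightarrow> nat \<Rightarrow> bool" where
 "Jr w k fc xc y \<longleftrightarrow>
 (pfst fc = 0 \<longrightarrow> y = 0) \<and>
 (pfst fc = 1 \<longrightarrow> xc \<noteq> 0 \<and> y = Suc (lhd xc)) \<and>
 (pfst fc = 2 \<longrightarrow> psnd fc < llen xc \<and> y = lnth xc (psnd fc)) \<and>
 (pfst fc = 3 \<longrightarrow> (\<exists>k'<k. jf w k' = pfst (psnd fc) \<and> jy w k' = y \<and> llen (jx w k') = llen (psnd (psnd fc)) \<and>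
     (\<forall>i<llen (psnd (psnd fc)). mem w k (lnth (psnd (psnd fc)) i) xc (lnth (jx w k') i)))) \<and>
 (pfst fc = 4 \<longrightarrow> xc \<noteq> 0 \<and> (lhd xc = 0 \<longrightarrow> mem w k (pfst (psnd fc)) (ltl xc) y) \<and>
     (lhd xc \<noteq> 0 \<longrightarrow> (\<exists>k'<k. jf w k' = fc \<and> jx w k' = lcons (lhd xc - 1) (ltl xc) \<and>
         mem w k (psnd (psnd fc)) (lcons (lhd xc - 1) (lcons (jy w k') (ltl xc))) y))) \<and>
 (5 \<le> pfst fc \<longrightarrow> mem w k (psnd fc) (lcons y xc) 0 \<and>
     (\<forall>m<y. \<exists>k'<k. jf w k' = psnd fc \<and> jx w k' = lcons m xc \<and> 0 < jy w k'))"

lemma enc_tl: "list_encode (tl (list_decode x)) = ltl x"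
  by (metis list_decode_inverse ltl_decode)
lemma enc_cons_tl: "list_encode (a # tl (list_decode x)) = lcons a (ltl x)"
  by (metis enc_tl lcons_enc)
lemma enc_cons: "list_encode (a # list_decode x) = lcons a x"
  by (metis lcons_enc list_decode_inverse)
lemma hd_lhd: "x \<noteq> 0 \<Longrightarrow> hd (list_decode x) = lhd x"
  by (simp add: lhd_decode)
lemma nth_lnth: "i < llen x \<Longrightarrow> list_decode x ! i = lnth x i"
  by (simp add: llen_decode lnth_decode)

lemma Jr_iff:
  assumes k: "k \<le> llen w"
  shows "J (set (take k (LW w))) (fc, xc, y) \<longleftrightarrow> Jr w k fc xc y"
proof -
  have bex2: "(\<exists>x\<in>set (take k (LW w)). Q x) \<longleftrightarrow> (\<exists>k'<k. Q (jf w k', jx w k', jy w k'))" for Q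
    using bex_iff[OF k, of "\<lambda>a b c. Q (a, b, c)"] by simp
  note rw = mem_iff[OF k] bex2 enc_tl enc_cons_tl enc_cons hd_lhd llen_decode[symmetric]
  consider "pfst fc = 0" | "pfst fc = 1" | "pfst fc = 2" | "pfst fc = 3" | "pfst fc = 4" | "5 \<le> pfst fc" by arith
  then show ?thesis
  proof cases
    case 1 then show ?thesis by (simp add: J_def Jr_def)
  next
    case 2 then show ?thesis by (auto simp add: J_def Jr_def rw)
  next
    case 3 then show ?thesis by (auto simp add: J_def Jr_def rw nth_lnth)
  next
    case 4
    have "(\<forall>i<llen (psnd (psnd fc)). (list_decode (psnd (psnd fc)) ! i, xc, list_decode (jx w k') ! i) \<in> set (take k (LW w)))
       \<longleftrightarrow> (\<forall>i<llen (psnd (psnd fc)). mem w k (lnth (psnd (psnd fc)) i) xc (lnth (jx w k') i))"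
      if "llen (jx w k') = llen (psnd (psnd fc))" for k'
      using that by (simp add: nth_lnth rw)
    then show ?thesis using 4 by (simp add: J_def Jr_def rw) blast
  next
    case 5
    show ?thesis
    proof (cases "xc = 0")
      case True then show ?thesis using 5 by (simp add: J_def Jr_def)
    next
      case False
      then obtain a r where xc: "xc = lcons a r" by (metis w_pos_lcons)
      have [simp]: "lhd (Suc (prod_encode (a', r'))) = a'" "ltl (Suc (prod_encode (a', r'))) = r'" for a' r'
        by (simp_all add: lhd_def ltl_def pfst_def psnd_def)
      show ?thesis using 5 unfolding xc by (simp add: J_def Jr_def rw lcons_def pe_def)
    qed
  next
    case 6 then show ?thesis by (simp add: J_def Jr_def rw lcons_def pe_def)
  qed
qed

definition validn :: "nat \<Rightarrow> bool" where
  "validn w \<longleftrightarrow> (\<forall>k<llen w. Jr w k (jf w k) (jx w k) (jy w k))"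

lemma validn_iff: "valid (LW w) \<longleftrightarrow> validn w"
  unfolding valid_def validn_def LW_len
  by (auto simp: LW_nth Jr_iff[symmetric])

definition Dn :: "nat \<Rightarrow> nat \<Rightarrow> bool" where
  "Dn e w \<longleftrightarrow> validn w \<and> mem w (llen w) e (lcons e 0) 0"

lemma LW_enc: "LW (list_encode (map enc3 L)) = L"
  by (simp add: LW_def map_idI)

lemma Dset_iff: "Dset e \<longleftrightarrow> (\<exists>w. Dn e w)"
proof -
  have m: "(e, list_encode [e], 0) \<in> set (LW w) \<longleftrightarrow> mem w (llen w) e (lcons e 0) 0" for w
    using mem_iff[of "llen w" w e "list_encode [e]" 0] lcons_enc[of e "[]"] by (simp add: LW_len)
  show ?thesis
  proof
    assume "Dset e"
    then obtain L where "valid L" "(e, list_encode [e], 0) \<in> set L" unfolding Dset_def by blast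
    then show "\<exists>w. Dn e w" unfolding Dn_def
      by (intro exI[of _ "list_encode (map enc3 L)"]) (simp add: validn_iff[symmetric] m[symmetric] LW_enc)
  next
    assume "\<exists>w. Dn e w"
    then obtain w where "Dn e w" by blast
    then show "Dset e" unfolding Dset_def Dn_def
      by (intro exI[of _ "LW w"]) (use m[of w] validn_iff[of w] in blast)
  qed
qed

lemma prp_comp_list:
  assumes "prp (length gs) P" "\<forall>g\<in>set gs. prc N g"
  shows "prp N (\<lambda>xs. P (map (\<lambda>g. g xs) gs))"
  using prc_comp_list[of gs "\<lambda>ys. if P ys then 1 else 0" N] assms unfolding prp_def by simp

lemma prp_comp2:
  assumes "prp 2 (\<lambda>ys. P (ys!0) (ys!1))" "prc N a" "prc N b"
  shows "prp N (\<lambda>xs. P (a xs) (b xs))"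
  using prp_comp_list[of "[a, b]" "\<lambda>ys. P (ys!0) (ys!1)" N] assms by (simp add: numeral_2_eq_2)

lemma prp_comp1:
  assumes "prp 1 (\<lambda>ys. P (ys!0))" "prc N a"
  shows "prp N (\<lambda>xs. P (a xs))"
  using prp_comp_list[of "[a]" "\<lambda>ys. P (ys!0)" N] assms by simp

lemma prp_comp5:
  assumes "prp 5 (\<lambda>ys. P (ys!0) (ys!1) (ys!2) (ys!3) (ys!4))" "prc N a" "prc N b" "prc N c" "prc N d" "prc N e"
  shows "prp N (\<lambda>xs. P (a xs) (b xs) (c xs) (d xs) (e xs))"
  using prp_comp_list[of "[a, b, c, d, e]" "\<lambda>ys. P (ys!0) (ys!1) (ys!2) (ys!3) (ys!4)" N] assms
  by (simp add: eval_nat_numeral)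

lemma prp_mem5: "prp 5 (\<lambda>xs. mem (xs!0) (xs!1) (xs!2) (xs!3) (xs!4))"
  unfolding mem_def by (intro prc_II; simp)

lemma prp_I_mem: "prc N a \<Longrightarrow> prc N b \<Longrightarrow> prc N c \<Longrightarrow> prc N d \<Longrightarrow> prc N e \<Longrightarrow>
   prp N (\<lambda>xs. mem (a xs) (b xs) (c xs) (d xs) (e xs))"
  by (rule prp_comp5[OF prp_mem5])

lemma prc_jf2: "prc 2 (\<lambda>xs. jf (xs!0) (xs!1))" unfolding jf_def by (intro prc_II; simp)
lemma prc_jx2: "prc 2 (\<lambda>xs. jx (xs!0) (xs!1))" unfolding jx_def by (intro prc_II; simp)
lemma prc_jy2: "prc 2 (\<lambda>xs. jy (xs!0) (xs!1))" unfolding jy_def by (intro prc_II; simp)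
lemma prc_I_jf: "prc N a \<Longrightarrow> prc N b \<Longrightarrow> prc N (\<lambda>xs. jf (a xs) (b xs))" by (rule prc_comp2[OF prc_jf2])
lemma prc_I_jx: "prc N a \<Longrightarrow> prc N b \<Longrightarrow> prc N (\<lambda>xs. jx (a xs) (b xs))" by (rule prc_comp2[OF prc_jx2])
lemma prc_I_jy: "prc N a \<Longrightarrow> prc N b \<Longrightarrow> prc N (\<lambda>xs. jy (a xs) (b xs))" by (rule prc_comp2[OF prc_jy2])

lemmas prc_III = prc_II prp_I_mem prc_I_jf prc_I_jx prc_I_jy

lemma prp_Jr5: "prp 5 (\<lambda>xs. Jr (xs!0) (xs!1) (xs!2) (xs!3) (xs!4))"
  unfolding Jr_def by (intro prc_III; simp)

lemma prp_validn: "prp 1 (\<lambda>xs. validn (xs!0))"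
  unfolding validn_def by (intro prc_III prp_comp5[OF prp_Jr5]; simp)

lemma prp_Dn: "prp 2 (\<lambda>xs. Dn (xs!0) (xs!1))"
  unfolding Dn_def by (intro prc_III prp_comp1[OF prp_validn]; simp)



fun oddprod :: "nat \<Rightarrow> nat" where
  "oddprod 0 = 1"
| "oddprod (Suc m) = oddprod m * (2 * m + 1)"

definition av :: "nat \<Rightarrow> nat \<Rightarrow> nat" where "av e w = 2 ^ e * oddprod (e + w)"

lemma oddprod_rec: "oddprod n = rec_nat 1 (\<lambda>m y. y * (2 * m + 1)) n"
  by (induction n) auto

lemma prc_oddprod1: "prc 1 (\<lambda>xs. oddprod (xs!0))"
proof -
  have "prc (Suc 0) (\<lambda>xs. rec_nat 1 (\<lambda>m y. (m # y # tl xs) ! 1 * (2 * (m # y # tl xs) ! 0 + 1)) (xs ! 0))"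
    by (rule prc_prim[OF prc_const]) (intro prc_II; simp)
  then show ?thesis by (simp add: oddprod_rec)
qed

lemma prc_I_oddprod: "prc N f \<Longrightarrow> prc N (\<lambda>xs. oddprod (f xs))"
  by (rule prc_comp1[OF prc_oddprod1])

lemma prc_av2: "prc 2 (\<lambda>xs. av (xs!0) (xs!1))"
  unfolding av_def by (intro prc_II prc_I_oddprod; simp)

lemma prc_I_av: "prc N f \<Longrightarrow> prc N g \<Longrightarrow> prc N (\<lambda>xs. av (f xs) (g xs))"
  by (rule prc_comp2[OF prc_av2])

lemma odd_oddprod: "odd (oddprod n)" by (induction n) auto
lemma oddprod_pos: "oddprod n \<ge> 1" by (induction n) auto
lemma oddprod_ge: "n \<le> oddprod n"
proof (induction n)
  case (Suc m)
  have "Suc m \<le> 1 * (2 * m + 1)" by simp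
  also have "\<dots> \<le> oddprod m * (2 * m + 1)" using oddprod_pos[of m] by (intro mult_right_mono) auto
  finally show ?case by simp
qed simp
lemma oddprod_mono: "m \<le> n \<Longrightarrow> oddprod m \<le> oddprod n"
proof (induction n)
  case (Suc n)
  then show ?case
    by (cases "m = Suc n") (auto intro: le_trans[OF _ mult_le_mono1[of _ _ 1, simplified]] le_SucI)
qed simp
lemma oddprod_dvd: "m \<le> n \<Longrightarrow> oddprod m dvd oddprod n"
proof (induction n)
  case (Suc n)
  then show ?case by (cases "m = Suc n") (auto intro: dvd_mult2 simp: le_Suc_eq)
qed simp

lemma av_ge: "e \<le> av e w" "w \<le> av e w"
proof -
  have "e < 2 ^ e" by simp
  also have "2 ^ e \<le> av e w" unfolding av_def using oddprod_pos by simp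
  finally show "e \<le> av e w" by simp
  have "w \<le> oddprod (e + w)" using oddprod_ge[of "e + w"] by simp
  also have "\<dots> \<le> av e w" unfolding av_def by simp
  finally show "w \<le> av e w" .
qed

definition Aset :: "int set" where
  "Aset = {0} \<union> {int (av e w) | e w. Dn e w}"

lemma mem_Aset: "x \<in> Aset \<longleftrightarrow> x = 0 \<or> (\<exists>e w. Dn e w \<and> x = int (av e w))"
  unfolding Aset_def by blast

definition charA :: "nat \<Rightarrow> nat" where
  "charA k = (if k mod 2 = 0 \<and> (k div 2 = 0 \<or> (\<exists>e<Suc (k div 2). \<exists>w<Suc (k div 2). Dn e w \<and> av e w = k div 2)) then 1 else 0)"

lemma prc_charA: "prc 1 (\<lambda>xs. charA (xs!0))"
  unfolding charA_def by (intro prc_III prc_I_av prp_comp2[OF prp_Dn]; simp)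

lemma int_decode_alt: "int_decode k = (if even k then int (k div 2) else - int (k div 2) - 1)"
  by (simp add: int_decode_def sum_decode_def)

lemma charA_correct: "charA k = (if int_decode k \<in> Aset then 1 else 0)"
proof -
  have "int_decode k \<in> Aset \<longleftrightarrow> even k \<and> (k div 2 = 0 \<or> (\<exists>e<Suc (k div 2). \<exists>w<Suc (k div 2). Dn e w \<and> av e w = k div 2))"
  proof (cases "even k")
    case True
    have "int (k div 2) \<in> Aset \<longleftrightarrow> (k div 2 = 0 \<or> (\<exists>e w. Dn e w \<and> av e w = k div 2))"
      unfolding mem_Aset by (simp only: of_nat_eq_iff of_nat_eq_0_iff) (metis (no_types))
    also have "\<dots> \<longleftrightarrow> (k div 2 = 0 \<or> (\<exists>e<Suc (k div 2). \<exists>w<Suc (k div 2). Dn e w \<and> av e w = k div 2))"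
      using av_ge by (metis le_imp_less_Suc)
    finally show ?thesis using True by (simp add: int_decode_alt)
  next
    case False
    have "- int (k div 2) - 1 \<notin> Aset" unfolding mem_Aset by auto
    then show ?thesis using False by (simp add: int_decode_alt)
  qed
  then show ?thesis unfolding charA_def by (simp add: even_iff_mod_2_eq_zero)
qed

lemma recursive_Aset: "recursive_int_set Aset"
proof -
  obtain c where "cmp 1 c (\<lambda>xs. charA (xs!0))" using prc_charA unfolding prc_def by blast
  then have "\<forall>n. eval c [n] (charA n)" unfolding cmp_def by (metis length_Cons list.size(3) nth_Cons_0 One_nat_def)
  then show ?thesis unfolding recursive_int_set_def recursive_fun_def charA_correct by blast
qed

lemma closed_Aset: "profinite_closed Aset"
  unfolding profinite_closed_def profinite_open_def
proof (intro ballI)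
  fix x assume "x \<in> - Aset"
  then have xA: "x \<notin> Aset" by simp
  then have x0: "x \<noteq> 0" by (simp add: mem_Aset)
  define K where "K = nat \<bar>x\<bar> + 1"
  define Q where "Q = int (oddprod K)"
  define B where "B = int (2 ^ K * oddprod K)"
  define P where "P = Q * (\<bar>x\<bar> + B + 1)"
  have QX: "\<bar>x\<bar> < Q" unfolding Q_def K_def using oddprod_ge[of "nat \<bar>x\<bar> + 1"] by linarith
  have B0: "B \<ge> 0" unfolding B_def by simp
  have Q1: "Q \<ge> 1" unfolding Q_def using oddprod_pos[of K] by linarith
  have P1: "P \<ge> 1"
  proof -
    have "(1::int) * 1 \<le> Q * (\<bar>x\<bar> + B + 1)" using Q1 B0 by (intro mult_mono) auto
    then show ?thesis unfolding P_def by simp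
  qed
  have QP: "Q dvd P" unfolding P_def by simp
  have elts: "Q dvd a \<or> (0 \<le> a \<and> a \<le> B)" if "a \<in> Aset" for a
  proof -
    from that consider "a = 0" | e w where "Dn e w" "a = int (av e w)" unfolding mem_Aset by blast
    then show ?thesis
    proof cases
      case 1 then show ?thesis by simp
    next
      case 2
      show ?thesis
      proof (cases "K \<le> e + w")
        case True
        then have "oddprod K dvd av e w" unfolding av_def by (intro dvd_mult oddprod_dvd)
        then show ?thesis unfolding Q_def 2 by (simp add: of_nat_dvd_iff)
      next
        case False
        then have "av e w \<le> 2 ^ K * oddprod K" unfolding av_def
          by (intro mult_le_mono power_increasing oddprod_mono) auto
        then show ?thesis unfolding B_def 2 by linarith
      qed
    qed
  qed
  have notin: "x + P * k \<notin> Aset" for k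
  proof
    assume a: "x + P * k \<in> Aset"
    from elts[OF a] show False
    proof
      assume "Q dvd x + P * k"
      then have "Q dvd x" using QP by (metis dvd_add_left_iff dvd_mult2)
      then have "Q \<le> \<bar>x\<bar>" using dvd_imp_le_int[OF x0] Q1 by fastforce
      then show False using QX by simp
    next
      assume b: "0 \<le> x + P * k \<and> x + P * k \<le> B"
      have "\<bar>P * k\<bar> < P"
      proof -
        have "\<bar>P * k\<bar> \<le> \<bar>x\<bar> + B" using b by linarith
        also have "\<dots> < 1 * (\<bar>x\<bar> + B + 1)" by simp
        also have "\<dots> \<le> P" unfolding P_def using Q1 B0 by (intro mult_right_mono) auto
        finally show ?thesis .
      qed
      then have "k = 0"
      proof (rule contrapos_pp)
        assume "k \<noteq> 0"
        then have "1 \<le> \<bar>k\<bar>" by simp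
        then have "P * 1 \<le> P * \<bar>k\<bar>" using P1 by (intro mult_left_mono) auto
        moreover have "\<bar>P * k\<bar> = P * \<bar>k\<bar>" using P1 by (simp add: abs_mult)
        ultimately show "\<not> \<bar>P * k\<bar> < P" by linarith
      qed
      then show False using a xA by simp
    qed
  qed
  show "\<exists>m p. 1 \<le> p \<and> x \<in> {m + p * k |k. True} \<and> {m + p * k |k. True} \<subseteq> - Aset"
    using P1 notin by (intro exI[of _ x] exI[of _ P]) (auto intro: exI[of _ 0])
qed

lemma pow2_odd_unique: "2 ^ a * (o1::nat) = 2 ^ b * o2 \<Longrightarrow> odd o1 \<Longrightarrow> odd o2 \<Longrightarrow> a = b"
proof (induction a arbitrary: b)
  case 0
  then show ?case by (cases b) auto
next
  case (Suc a)
  then show ?case by (cases b) auto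
qed

lemma av_mod: "av e w mod 2 ^ (e + 1) = 2 ^ e"
proof -
  obtain t where t: "oddprod (e + w) = 2 * t + 1" using odd_oddprod by (metis oddE)
  have "av e w = 2 ^ (e + 1) * t + 2 ^ e" unfolding av_def t by (simp add: algebra_simps)
  then show ?thesis by simp
qed

lemma av_mod_eq: "av e' w mod 2 ^ (e + 1) = 2 ^ e \<Longrightarrow> e' = e"
proof -
  assume h: "av e' w mod 2 ^ (e + 1) = 2 ^ e"
  define t where "t = av e' w div 2 ^ (e + 1)"
  have "av e' w = 2 ^ (e + 1) * t + 2 ^ e" using h unfolding t_def by (metis div_mult_mod_eq mult.commute)
  then have "2 ^ e' * oddprod (e' + w) = 2 ^ e * (2 * t + 1)" unfolding av_def by (simp add: algebra_simps)
  then show ?thesis using pow2_odd_unique odd_oddprod by (metis odd_two_times_div_two_succ even_add odd_one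
      dvd_triv_left)
qed

lemma res_bit: "int (2 ^ e) \<in> res_mod Aset (int (2 ^ (e + 1))) \<longleftrightarrow> (\<exists>w. Dn e w)"
proof
  assume "int (2 ^ e) \<in> res_mod Aset (int (2 ^ (e + 1)))"
  then obtain x where x: "x \<in> Aset" "x mod int (2 ^ (e + 1)) = int (2 ^ e)" unfolding res_mod_def by blast
  from x(1) consider "x = 0" | e' w where "Dn e' w" "x = int (av e' w)" unfolding mem_Aset by blast
  then show "\<exists>w. Dn e w"
  proof cases
    case 1 then show ?thesis using x(2) by simp
  next
    case 2
    then have "int (av e' w mod 2 ^ (e + 1)) = int (2 ^ e)" using x(2) by (simp add: of_nat_mod)
    then have "av e' w mod 2 ^ (e + 1) = 2 ^ e" by (simp only: of_nat_eq_iff)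
    then have "e' = e" by (rule av_mod_eq)
    then show ?thesis using 2 by blast
  qed
next
  assume "\<exists>w. Dn e w"
  then obtain w where w: "Dn e w" by blast
  have "int (av e w) \<in> Aset" using w unfolding mem_Aset by blast
  moreover have "int (av e w) mod int (2 ^ (e + 1)) = int (2 ^ e)" using av_mod[of e w] by (metis of_nat_mod)
  moreover have "int (2 ^ e) \<in> {0..int (2 ^ (e + 1)) - 1}" by simp
  ultimately show "int (2 ^ e) \<in> res_mod Aset (int (2 ^ (e + 1)))" unfolding res_mod_def by blast
qed

lemma prc_fun1: "\<forall>n. eval c [n] (F n) \<Longrightarrow> prc 1 (\<lambda>xs. F (xs!0))"
  unfolding prc_def cmp_def
  by (intro exI[of _ c] allI impI) (metis length_0_conv length_Suc_conv nth_Cons_0 One_nat_def)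

lemma res_finite: "finite (nat ` res_mod A n)"
proof -
  have "res_mod A n \<subseteq> {0..n-1}" unfolding res_mod_def by auto
  then show ?thesis by (meson finite_atLeastAtMost_int finite_imageI finite_subset)
qed

lemma res_nonneg: "r \<in> res_mod A n \<Longrightarrow> 0 \<le> r" unfolding res_mod_def by auto

lemma not_res_rec: "\<not> res_mod_map_recursive Aset"
proof
  assume "res_mod_map_recursive Aset"
  then obtain f c where c: "\<forall>n. eval c [n] (f n)"
    and f: "\<forall>n\<ge>1. f n = set_encode (nat ` res_mod Aset (int n))"
    unfolding res_mod_map_recursive_def recursive_fun_def by blast
  define D where "D e = f (2 ^ (e + 1)) div 2 ^ (2 ^ e) mod 2" for e
  have pf: "prc 1 (\<lambda>xs. f (xs!0))" by (rule prc_fun1[OF c])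
  have "prc 1 (\<lambda>xs. f (2 ^ (xs!0 + 1)) div 2 ^ (2 ^ (xs!0)) mod 2)"
    by (intro prc_II prc_comp1[OF pf]; simp)
  then have "prc 1 (\<lambda>xs. D (xs!0))" unfolding D_def .
  then obtain dd where dd: "cmp 1 dd (\<lambda>xs. D (xs!0))" unfolding prc_def by blast
  have Dv: "D e = (if Dset e then 1 else 0)" for e
  proof -
    define S where "S = nat ` res_mod Aset (int (2 ^ (e + 1)))"
    have fS: "f (2 ^ (e + 1)) = set_encode S" using f unfolding S_def by simp
    have "2 ^ e \<in> S \<longleftrightarrow> int (2 ^ e) \<in> res_mod Aset (int (2 ^ (e + 1)))"
      unfolding S_def using res_nonneg by (auto simp: image_iff)
    also have "\<dots> \<longleftrightarrow> Dset e" by (rule trans[OF res_bit Dset_iff[symmetric]])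
    finally have "odd (set_encode S div 2 ^ (2 ^ e)) \<longleftrightarrow> Dset e"
      using set_encode_inverse[OF res_finite[of Aset "int (2 ^ (e + 1))"]] unfolding S_def[symmetric]
      by (metis mem_Collect_eq set_decode_def)
    then show ?thesis unfolding D_def fS using mod2_eq_if[of "set_encode S div 2 ^ 2 ^ e"] by auto
  qed
  have ev: "eval dd [code dd] (D (code dd))" using dd unfolding cmp_def by (metis length_Cons list.size(3) nth_Cons_0 One_nat_def)
  show False
  proof (cases "Dset (code dd)")
    case True
    then have "eval dd [code dd] 0" by (simp add: Dset_code)
    moreover have "eval dd [code dd] 1" using ev True Dv by simp
    ultimately show False using eval_det by fastforce
  next
    case False
    then have "eval dd [code dd] 0" using ev Dv by simp
    then show False using False by (simp add: Dset_code)
  qed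
qed

theorem mainTheorem19:
  shows "\<exists>A :: int set. recursive_int_set A \<and> profinite_closed A \<and> \<not> res_mod_map_recursive A"
  using recursive_Aset closed_Aset not_res_rec by blast


end
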